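(* Let $\hat\gamma,\lambda,\Gamma,a,b,\tau,\mu_f>0$ with $a>b$, $a+b<1$, $2a+3b<2$, $\Gamma\ge1$ and $\Gamma\ge\big(\frac{4}{\hat\gamma\lambda\mu_f\tau}\big)^{1/(1-a-b)}$. Define $\hat\gamma_k=\hat\gamma/(k+\Gamma)^a$, $\lambda_k=\lambda/(k+\Gamma)^b$ and $\Lambda_k=|1-\lambda_{k+1}/\lambda_k|$ for $k\ge0$. Suppose moreover that there are numbers $\gamma_{i,k}\ge0$ ($i\in[m]$, $k\ge0$) with $\max_j\gamma_{j,k}=\hat\gamma_k$, nonnegative vectors $u,v\in\mathbb{R}^m$ and $\theta>0$ with $\frac1m\sum_iu_i\gamma_{i,k}v_i\ge\theta\hat\gamma_k$ for all $k\ge0$. Then: (i) $(\lambda_k)$ is a strictly positive decreasing sequence with $\lambda_k\to0$, and $(\hat\gamma_k)$ is a strictly positive decreasing sequence with $\hat\gamma_k\to0$ and $\hat\gamma_k/\lambda_k\to0$; (ii) $\Lambda_k/\lambda_k\to0$, $\Lambda_{k+1}\le\Lambda_k$ for all $k\ge0$, and $\Lambda_{k-1}\le\frac1{k+\Gamma}$ for all $k\ge1$; (iii) for all $k\ge1$, $\dfrac{(k+\Gamma)\hat\gamma_k\lambda_k}{(k+\Gamma-1)\hat\gamma_{k-1}\lambda_{k-1}}\le1+0.5\mu_f\hat\gamma_k\lambda_k\tau$. *)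

theory Defs
  imports "HOL-Analysis.Analysis"
begin

definition poly_step :: "real \<Rightarrow> real \<Rightarrow> real \<Rightarrow> nat \<Rightarrow> real" where
  "poly_step c G e k = c / (real k + G) powr e"

definition rel_change :: "(nat \<Rightarrow> real) \<Rightarrow> nat \<Rightarrow> real" where
  "rel_change l k = \<bar>1 - l (Suc k) / l k\<bar>"

end

theory Submission
  imports Defs
begin

lemma ps_eq: "G > 0 \<Longrightarrow> poly_step c G e k = c * (real k + G) powr (-e)"
  by (simp add: poly_step_def powr_minus divide_inverse)

lemma rc_eq:
  assumes "G > 0" "lam > 0" "b > 0"
  shows "rel_change (poly_step lam G b) k = 1 - ((real k + G) / (real k + G + 1)) powr b"
proof -
  define x where "x = real k + G"
  have x: "x > 0" using assms x_def by simp
  have "poly_step lam G b (Suc k) / poly_step lam G b k = (x / (x+1)) powr b"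
    using x assms by (simp add: poly_step_def x_def powr_divide add_ac)
  moreover have "(x / (x+1)) powr b \<le> 1"
  proof -
    have "(x / (x+1)) powr b \<le> 1 powr b" using x assms by (intro powr_mono2) auto
    then show ?thesis by simp
  qed
  ultimately show ?thesis unfolding rel_change_def x_def by simp
qed

lemma rc_bound:
  fixes x b :: real
  assumes "x > 0" "0 < b" "b < 1"
  shows "1 - (x / (x + 1)) powr b \<le> 1 / (x+1)"
proof -
  have "(x/(x+1)) powr 1 \<le> (x/(x+1)) powr b"
    by (rule powr_mono') (use assms in auto)
  moreover have "x/(x+1) = 1 - 1/(x+1)" using assms by (simp add: field_simps)
  ultimately show ?thesis using assms by simp
qed

lemma rc_mono:
  fixes x b :: real
  assumes "x > 0" "0 < b"
  shows "(x / (x + 1)) powr b \<le> ((x+1) / (x + 2)) powr b"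
  using assms by (intro powr_mono2) (auto simp: field_simps)

lemma ratio_bound:
  fixes x c :: real
  assumes "x \<ge> 2" "0 < c" "c \<le> 1" 
  shows "(x / (x - 1)) powr c \<le> 1 + 2 / x"
proof -
  have "(x/(x-1)) powr c \<le> (x/(x-1)) powr 1"
    by (rule powr_mono) (use assms in auto)
  also have "\<dots> = 1 + 1/(x-1)" using assms by (simp add: field_simps)
  also have "\<dots> \<le> 1 + 2/x" using assms by (simp add: field_simps)
  finally show ?thesis .
qed

lemma lim_powr:
  assumes "e < 0" "G > 0"
  shows "(\<lambda>k. (real k + G) powr e) \<longlonglongrightarrow> 0"
  apply (rule tendsto_neg_powr[OF assms(1)])
  apply (subst add.commute)
  by (rule filterlim_tendsto_add_at_top[OF tendsto_const filterlim_real_sequentially])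

theorem lemma1:
  fixes gh lam G a b tau mu_f theta :: real
    and m :: nat
    and gam :: "nat \<Rightarrow> nat \<Rightarrow> real"
    and u v :: "nat \<Rightarrow> real"
  assumes pos: "gh > 0" "lam > 0" "G > 0" "a > 0" "b > 0" "tau > 0" "mu_f > 0"
    and ab: "a > b" "a + b < 1" "2 * a + 3 * b < 2"
    and G1: "G \<ge> 1"
    and G2: "G \<ge> (4 / (gh * lam * mu_f * tau)) powr (1 / (1 - a - b))"
    and m_pos: "m \<ge> 1"
    and gam_nonneg: "\<And>i k. i \<in> {1..m} \<Longrightarrow> gam i k \<ge> 0"
    and gam_max: "\<And>k. Max ((\<lambda>j. gam j k) ` {1..m}) = poly_step gh G a k"
    and uv: "\<And>i. i \<in> {1..m} \<Longrightarrow> u i \<ge> 0 \<and> v i \<ge> 0"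
    and theta: "theta > 0"
    and lower: "\<And>k. (1 / real m) * (\<Sum>i\<in>{1..m}. u i * gam i k * v i)
                   \<ge> theta * poly_step gh G a k"
  shows "(\<forall>k. poly_step lam G b k > 0) \<and> decseq (poly_step lam G b)
           \<and> poly_step lam G b \<longlonglongrightarrow> 0
         \<and> (\<forall>k. poly_step gh G a k > 0) \<and> decseq (poly_step gh G a)
           \<and> poly_step gh G a \<longlonglongrightarrow> 0
           \<and> (\<lambda>k. poly_step gh G a k / poly_step lam G b k) \<longlonglongrightarrow> 0
         \<and> (\<lambda>k. rel_change (poly_step lam G b) k / poly_step lam G b k) \<longlonglongrightarrow> 0
         \<and> (\<forall>k. rel_change (poly_step lam G b) (Suc k) \<le> rel_change (poly_step lam G b) k)
         \<and> (\<forall>k\<ge>1. rel_change (poly_step lam G b) (k - 1) \<le> 1 / (real k + G))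
         \<and> (\<forall>k\<ge>1. ((real k + G) * poly_step gh G a k * poly_step lam G b k)
                  / ((real k + G - 1) * poly_step gh G a (k - 1) * poly_step lam G b (k - 1))
                \<le> 1 + (1/2) * mu_f * poly_step gh G a k * poly_step lam G b k * tau)"
proof -
  let ?l = "poly_step lam G b" and ?g = "poly_step gh G a"
  have xpos: "real k + G > 0" for k using pos by simp
  have decs: "decseq (poly_step c G e)" if "c > 0" "e > 0" for c e
  proof (rule decseq_SucI)
    fix n
    have "(real n + G) powr e \<le> (real (Suc n) + G) powr e"
      using xpos[of n] that by (intro powr_mono2) auto
    moreover have "(real n + G) powr e > 0" using xpos[of n] by simp
    ultimately show "poly_step c G e (Suc n) \<le> poly_step c G e n"
      unfolding poly_step_def using that xpos[of n] xpos[of "Suc n"]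
      by (intro divide_left_mono mult_pos_pos) auto
  qed
  have lims: "poly_step c G e \<longlonglongrightarrow> 0" if "e > 0" for c e
  proof -
    have "(\<lambda>k. c * (real k + G) powr (-e)) \<longlonglongrightarrow> c * 0"
      by (intro tendsto_mult tendsto_const lim_powr) (use that pos in auto)
    moreover have "poly_step c G e = (\<lambda>k. c * (real k + G) powr (-e))"
      using ps_eq[OF pos(3)] by (intro ext) simp
    ultimately show ?thesis by simp
  qed
  have P1: "\<forall>k. ?l k > 0" "\<forall>k. ?g k > 0"
    using pos xpos by (auto simp: poly_step_def)
  have R1: "(\<lambda>k. ?g k / ?l k) \<longlonglongrightarrow> 0"
  proof -
    have "?g k / ?l k = (gh / lam) * (real k + G) powr (b - a)" for k
      using xpos[of k] pos by (simp add: ps_eq powr_diff powr_minus field_simps)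
    moreover have "(\<lambda>k. (gh / lam) * (real k + G) powr (b - a)) \<longlonglongrightarrow> (gh/lam) * 0"
      by (intro tendsto_mult tendsto_const lim_powr) (use ab pos in auto)
    ultimately show ?thesis by simp
  qed
  have rcb: "rel_change ?l k \<le> 1 / (real k + G + 1)" for k
    using rc_eq[OF pos(3) pos(2) pos(5), of k] rc_bound[OF xpos[of k] pos(5)] ab by simp
  have rcn: "rel_change ?l k \<ge> 0" for k by (simp add: rel_change_def)
  have R2: "(\<lambda>k. rel_change ?l k / ?l k) \<longlonglongrightarrow> 0"
  proof (rule tendsto_sandwich[of "\<lambda>_. 0" _ _ "\<lambda>k. (1/lam) * (real k + G) powr (b - 1)"])
    show "\<forall>\<^sub>F n in sequentially. 0 \<le> rel_change ?l n / ?l n"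
      using P1 rcn by (intro always_eventually allI divide_nonneg_pos) auto
    show "\<forall>\<^sub>F n in sequentially. rel_change ?l n / ?l n \<le> (1/lam) * (real n + G) powr (b - 1)"
    proof (rule always_eventually, rule allI)
      fix n
      define x where "x = real n + G"
      have x: "x > 0" using xpos x_def by simp
      have "rel_change ?l n / ?l n \<le> (1 / (x + 1)) / ?l n"
        using rcb[of n] P1(1)[rule_format, of n] x_def by (intro divide_right_mono) auto
      also have "\<dots> = x powr b / (lam * (x+1))"
        using x pos by (simp add: poly_step_def x_def)
      also have "\<dots> \<le> x powr b / (lam * x)"
        using x pos by (intro divide_left_mono mult_pos_pos) auto
      also have "\<dots> = (1/lam) * x powr (b - 1)"
        using x by (simp add: powr_diff)
      finally show "rel_change ?l n / ?l n \<le> (1/lam) * (real n + G) powr (b - 1)"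
        unfolding x_def .
    qed
    have "(\<lambda>k. (1/lam) * (real k + G) powr (b - 1)) \<longlonglongrightarrow> (1/lam) * 0"
      by (intro tendsto_mult tendsto_const lim_powr) (use ab pos in auto)
    then show "(\<lambda>k. (1/lam) * (real k + G) powr (b - 1)) \<longlonglongrightarrow> 0" by simp
  qed auto
  have R3: "\<forall>k. rel_change ?l (Suc k) \<le> rel_change ?l k"
  proof
    fix k
    have "real (Suc k) + G = (real k + G) + 1" by simp
    then show "rel_change ?l (Suc k) \<le> rel_change ?l k"
      using rc_eq[OF pos(3) pos(2) pos(5), of k] rc_eq[OF pos(3) pos(2) pos(5), of "Suc k"]
        rc_mono[OF xpos[of k] pos(5)]
      by (simp add: add_ac)
  qed
  have R4: "\<forall>k\<ge>1. rel_change ?l (k - 1) \<le> 1 / (real k + G)"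
  proof (intro allI impI)
    fix k :: nat assume "k \<ge> 1"
    then have "real (k - 1) + G + 1 = real k + G" by simp
    then show "rel_change ?l (k - 1) \<le> 1 / (real k + G)" using rcb[of "k-1"] by simp
  qed
  have R5: "\<forall>k\<ge>1. ((real k + G) * ?g k * ?l k) / ((real k + G - 1) * ?g (k - 1) * ?l (k - 1))
                \<le> 1 + (1/2) * mu_f * ?g k * ?l k * tau"
  proof (intro allI impI)
    fix k :: nat assume k: "k \<ge> 1"
    define x where "x = real k + G"
    define c where "c = 1 - a - b"
    define K where "K = gh * lam * mu_f * tau"
    have x2: "x \<ge> 2" using k G1 x_def by simp
    have c: "c > 0" "c \<le> 1" using ab pos c_def by auto
    have K: "K > 0" using pos K_def by simp
    have km: "real (k - 1) + G = x - 1" using k x_def by simp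
    have gk: "?g k = gh * x powr (-a)" "?l k = lam * x powr (-b)"
      by (simp_all add: ps_eq[OF pos(3)] x_def)
    have e1: "x * ?g k * ?l k = gh * lam * x powr c"
      unfolding gk using x2 by (simp add: ps_eq[OF pos(3)] x_def[symmetric] c_def powr_diff powr_minus powr_add field_simps)
    have gk1: "?g (k-1) = gh * (x-1) powr (-a)" "?l (k-1) = lam * (x-1) powr (-b)"
      by (simp_all only: ps_eq[OF pos(3)] km)
    have e2: "(x - 1) * ?g (k-1) * ?l (k-1) = gh * lam * (x - 1) powr c"
      unfolding gk1 using x2 by (simp add: c_def powr_diff powr_minus powr_add field_simps)
    have "((real k + G) * ?g k * ?l k) / ((real k + G - 1) * ?g (k - 1) * ?l (k - 1))
        = x powr c / (x - 1) powr c"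
      using e1 e2 pos by (simp add: x_def)
    also have "\<dots> = (x / (x - 1)) powr c" using x2 by (simp add: powr_divide)
    also have "\<dots> \<le> 1 + 2 / x" by (rule ratio_bound[OF x2 c])
    also have "\<dots> \<le> 1 + (1/2) * mu_f * ?g k * ?l k * tau"
    proof -
      have "4 / K = ((4 / K) powr (1 / c)) powr c"
        using K c by (simp add: powr_powr)
      also have "\<dots> \<le> G powr c"
        using G2 K c by (intro powr_mono2) (auto simp: K_def c_def)
      also have "\<dots> \<le> x powr c"
        using pos c x_def by (intro powr_mono2) auto
      finally have "4 / K \<le> x powr c" .
      then have h: "4 \<le> K * x powr c" using K by (simp add: field_simps)
      have "(1/2) * mu_f * ?g k * ?l k * tau = (K / 2) * x powr c / x"
        unfolding gk using x2 by (simp add: K_def c_def powr_diff powr_minus powr_add field_simps)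
      moreover have "2 / x \<le> (K / 2) * x powr c / x"
        using h x2 by (simp add: field_simps)
      ultimately show ?thesis by simp
    qed
    finally show "((real k + G) * ?g k * ?l k) / ((real k + G - 1) * ?g (k - 1) * ?l (k - 1))
                \<le> 1 + (1/2) * mu_f * ?g k * ?l k * tau" .
  qed
  show ?thesis
    using P1 R1 R2 R3 R4 R5 decs[OF pos(2) pos(5)] decs[OF pos(1) pos(4)]
      lims[OF pos(5)] lims[OF pos(4)] by blast
qed

end
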